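(* Let $I=\{1,\dots,m\}$, $J=\{1,\dots,n\}$, let $b\in\mathbb{R}^m$, let $\hat{x}\in\mathbb{R}^n$ with $\hat{x}\neq 0$, let $\hat{a}_i\in\mathbb{R}^n$ ($i\in I$) be given prior vectors, let $\xi\in\mathbb{R}^m$ be a vector of real-valued weights, and let $\|\cdot\|$ be a norm on $\mathbb{R}^n$. Consider the problem NLO-SD: \[ \min_{A,c,\pi}\ \sum_{i\in I}\xi_i\|a_i-\hat{a}_i\| \] subject to $\sum_{j\in J}c_j\hat{x}_j-\sum_{i\in I}b_i\pi_i=0$; $\sum_{j\in J}a_{ij}\hat{x}_j\ge b_i$ for all $i\in I$; $\sum_{i\in I}\pi_i=1$; $\sum_{i\in I}a_{ij}\pi_i=c_j$ for all $j\in J$; $\pi_i\ge0$ for all $i\in I$. Let $\|\hat{x}\|^*=\max_{\|v\|=1}\hat{x}^\top v$ be the dual norm and let $v(\hat{x})\in\arg\max_{\|v\|=1}\hat{x}^\top v$. For each $i\in I$ define \[ f_i=\frac{\xi_i|\hat{a}_i^\top\hat{x}-b_i|}{\|\hat{x}\|^*},\qquad a^f_i=\hat{a}_i-\frac{\hat{a}_i^\top\hat{x}-b_i}{\|\hat{x}\|^*}v(\hat{x}), \] $g_i=f_i$ and $a^g_i=a^f_i$ if $\hat{a}_i^\top\hat{x}<b_i$, and $g_i=0$ and $a^g_i=\hat{a}_i$ otherwise. Let $i^*\in\arg\min_{i\in I}\{f_i-g_i\}$. Then the optimal value of NLO-SD is $f_{i^*}+\sum_{i\in I\setminus\{i^*\}}g_i$,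 and an optimal solution $(A,c,\pi)$ is given by $a_{i^*}=a^f_{i^*}$, $a_i=a^g_i$ for $i\in I\setminus\{i^*\}$, $c=a_{i^*}$, $\pi=e_{i^*}$. Moreover, if $b_i\neq0$ and $\hat{a}_i\neq0$ for all $i\in I$, then this solution satisfies $c\neq0$ and $a_i\neq0$ for all $i\in I$.
   Context: $a_i$ denotes the $i$-th row of $A=(a_{ij})\in\mathbb{R}^{m\times n}$, $c\in\mathbb{R}^n$, $\pi\in\mathbb{R}^m$, and $e_i$ denotes the $i$-th unit vector of $\mathbb{R}^m$. *)

theory Defs
  imports "HOL-Analysis.Analysis"
begin

definition is_norm :: "(real^'n \<Rightarrow> real) \<Rightarrow> bool" where
  "is_norm N \<longleftrightarrow> (\<forall>x. N x = 0 \<longleftrightarrow> x = 0) \<and> (\<forall>t x. N (t *\<^sub>R x) = \<bar>t\<bar> * N x)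
     \<and> (\<forall>x y. N (x + y) \<le> N x + N y)"

definition dual_norm :: "(real^'n \<Rightarrow> real) \<Rightarrow> real^'n \<Rightarrow> real" where
  "dual_norm N x = Sup ((\<lambda>v. x \<bullet> v) ` {v. N v = 1})"

definition nlo_sd_feasible ::
  "real^'m \<Rightarrow> real^'n \<Rightarrow> real^'n^'m \<Rightarrow> real^'n \<Rightarrow> real^'m \<Rightarrow> bool" where
  "nlo_sd_feasible b xh A c \<pi> \<longleftrightarrow>
     (\<Sum>j\<in>UNIV. c$j * xh$j) - (\<Sum>i\<in>UNIV. b$i * \<pi>$i) = 0
   \<and> (\<forall>i. (\<Sum>j\<in>UNIV. A$i$j * xh$j) \<ge> b$i)
   \<and> (\<Sum>i\<in>UNIV. \<pi>$i) = 1
   \<and> (\<forall>j. (\<Sum>i\<in>UNIV. A$i$j * \<pi>$i) = c$j)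
   \<and> (\<forall>i. \<pi>$i \<ge> 0)"

definition nlo_sd_obj ::
  "real^'m \<Rightarrow> (real^'n \<Rightarrow> real) \<Rightarrow> real^'n^'m \<Rightarrow> real^'n^'m \<Rightarrow> real" where
  "nlo_sd_obj \<xi> N ah A = (\<Sum>i\<in>UNIV. \<xi>$i * N (A$i - ah$i))"

definition f_val :: "real^'m \<Rightarrow> (real^'n \<Rightarrow> real) \<Rightarrow> real^'m \<Rightarrow> real^'n \<Rightarrow> real^'n^'m \<Rightarrow> 'm \<Rightarrow> real" where
  "f_val \<xi> N b xh ah i = \<xi>$i * \<bar>ah$i \<bullet> xh - b$i\<bar> / dual_norm N xh"

definition a_f :: "(real^'n \<Rightarrow> real) \<Rightarrow> real^'m \<Rightarrow> real^'n \<Rightarrow> real^'n^'m \<Rightarrow> real^'n \<Rightarrow> 'm \<Rightarrow> real^'n" where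
  "a_f N b xh ah v i = ah$i - ((ah$i \<bullet> xh - b$i) / dual_norm N xh) *\<^sub>R v"

definition g_val :: "real^'m \<Rightarrow> (real^'n \<Rightarrow> real) \<Rightarrow> real^'m \<Rightarrow> real^'n \<Rightarrow> real^'n^'m \<Rightarrow> 'm \<Rightarrow> real" where
  "g_val \<xi> N b xh ah i = (if ah$i \<bullet> xh < b$i then f_val \<xi> N b xh ah i else 0)"

definition a_g :: "(real^'n \<Rightarrow> real) \<Rightarrow> real^'m \<Rightarrow> real^'n \<Rightarrow> real^'n^'m \<Rightarrow> real^'n \<Rightarrow> 'm \<Rightarrow> real^'n" where
  "a_g N b xh ah v i = (if ah$i \<bullet> xh < b$i then a_f N b xh ah v i else ah$i)"

end

theory Submission imports Defs begin

lemma nb: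
  assumes "is_norm N"
  shows "N 0 = 0" "N x \<ge> 0" "N (-x) = N x" "N (t *\<^sub>R x) = \<bar>t\<bar> * N x" "N (x + y) \<le> N x + N y"
proof -
  show z: "N 0 = 0" using assms unfolding is_norm_def by auto
  show s: "N (t *\<^sub>R x) = \<bar>t\<bar> * N x" using assms unfolding is_norm_def by auto
  show "N (x + y) \<le> N x + N y" using assms unfolding is_norm_def by auto
  show m: "N (-x) = N x" using assms unfolding is_norm_def by (metis abs_minus_cancel abs_one mult_1 scaleR_minus1_left)
  have "N (x + -x) \<le> N x + N (-x)" using assms unfolding is_norm_def by blast
  then show "N x \<ge> 0" using z m by simp
qed

lemma n_sum:
  assumes "is_norm N" "finite S"
  shows "N (sum f S) \<le> (\<Sum>i\<in>S. N (f i))"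
  using assms(2)
proof (induction S rule: finite_induct)
  case empty then show ?case using nb[OF assms(1)] by simp
next
  case (insert x F)
  then show ?case using nb(5)[OF assms(1), of "f x" "sum f F"] by simp
qed

lemma n_upper:
  fixes N :: "real^'n \<Rightarrow> real"
  assumes "is_norm N"
  shows "N x \<le> (\<Sum>j\<in>UNIV. N (axis j 1)) * norm x"
proof -
  have "x = (\<Sum>j\<in>UNIV. (x$j) *\<^sub>R axis j 1)"
    using basis_expansion[of x] by (simp add: scalar_mult_eq_scaleR)
  then have "N x = N (\<Sum>j\<in>UNIV. (x$j) *\<^sub>R axis j 1)" by simp
  also have "\<dots> \<le> (\<Sum>j\<in>UNIV. N ((x$j) *\<^sub>R axis j 1))" by (rule n_sum[OF assms]) simp
  also have "\<dots> = (\<Sum>j\<in>UNIV. \<bar>x$j\<bar> * N (axis j 1))" using nb(4)[OF assms] by simp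
  also have "\<dots> \<le> (\<Sum>j\<in>UNIV. norm x * N (axis j 1))"
    by (rule sum_mono, rule mult_right_mono) (auto simp: component_le_norm_cart nb[OF assms])
  finally show ?thesis by (simp add: sum_distrib_left mult.commute)
qed

lemma n_cont:
  fixes N :: "real^'n \<Rightarrow> real"
  assumes "is_norm N"
  shows "continuous_on UNIV N"
proof -
  define K where "K = (\<Sum>j\<in>UNIV. N (axis j 1))"
  have K0: "K \<ge> 0" unfolding K_def by (rule sum_nonneg) (simp add: nb[OF assms])
  have lip: "\<bar>N x - N y\<bar> \<le> K * norm (x - y)" for x y
  proof -
    have "N x \<le> N y + N (x - y)" using nb(5)[OF assms, of y "x - y"] by simp
    moreover have "N y \<le> N x + N (y - x)" using nb(5)[OF assms, of x "y - x"] by simp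
    moreover have "N (y - x) = N (x - y)" using nb(3)[OF assms, of "x - y"] by simp
    moreover have "N (x - y) \<le> K * norm (x - y)" using n_upper[OF assms] K_def by simp
    ultimately show ?thesis by linarith
  qed
  show ?thesis unfolding continuous_on_iff
  proof (intro ballI allI impI)
    fix x :: "real^'n" and e :: real assume e: "e > 0"
    show "\<exists>d>0. \<forall>x'\<in>UNIV. dist x' x < d \<longrightarrow> dist (N x') (N x) < e"
    proof (intro exI[of _ "e / (K + 1)"] conjI ballI impI)
      show "e / (K + 1) > 0" using e K0 by simp
      fix x' assume "dist x' x < e / (K + 1)"
      then have "(K + 1) * norm (x' - x) < e" using K0 by (simp add: dist_norm field_simps)
      moreover have "\<bar>N x' - N x\<bar> \<le> K * norm (x' - x)" by (rule lip)
      moreover have "K * norm (x' - x) \<le> (K + 1) * norm (x' - x)" by (simp add: distrib_right)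
      ultimately show "dist (N x') (N x) < e" by (simp add: dist_real_def)
    qed
  qed
qed

lemma n_lower:
  fixes N :: "real^'n \<Rightarrow> real"
  assumes "is_norm N"
  shows "\<exists>m>0. \<forall>x. m * norm x \<le> N x"
proof -
  have ne: "sphere (0::real^'n) 1 \<noteq> {}"
    by (metis norm_axis_1 mem_sphere_0 empty_iff)
  obtain x0 where x0: "x0 \<in> sphere 0 1" and mn: "\<forall>y\<in>sphere 0 1. N x0 \<le> N y"
    using continuous_attains_inf[OF compact_sphere ne continuous_on_subset[OF n_cont[OF assms]]] by auto
  have "x0 \<noteq> 0" using x0 by auto
  then have pos: "N x0 > 0" using assms nb(2)[OF assms, of x0] unfolding is_norm_def by force
  have "N x0 * norm x \<le> N x" for x
  proof (cases "x = 0")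
    case True then show ?thesis using nb[OF assms] by simp
  next
    case False
    have "N x0 \<le> N ((1 / norm x) *\<^sub>R x)" using mn False by simp
    also have "\<dots> = N x / norm x" using nb(4)[OF assms] by simp
    finally show ?thesis using False by (simp add: field_simps)
  qed
  then show ?thesis using pos by (metis mult.commute)
qed

lemma dual_bound:
  fixes N :: "real^'n \<Rightarrow> real"
  assumes "is_norm N"
  shows "xh \<bullet> w \<le> dual_norm N xh * N w"
proof -
  obtain m where m: "m > 0" "\<forall>x. m * norm x \<le> N x" using n_lower[OF assms] by blast
  have bdd: "bdd_above ((\<lambda>v. xh \<bullet> v) ` {v. N v = 1})"
  proof (rule bdd_aboveI2)
    fix v assume "v \<in> {v. N v = 1}"
    then have "norm v \<le> 1 / m" using m by (simp add: field_simps) (metis mult.commute)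
    then have "norm xh * norm v \<le> norm xh * (1/m)" by (intro mult_left_mono) auto
    moreover have "xh \<bullet> v \<le> norm xh * norm v" using Cauchy_Schwarz_ineq2[of xh v] by linarith
    ultimately show "xh \<bullet> v \<le> norm xh / m" by (simp add: divide_inverse)
  qed
  show ?thesis
  proof (cases "w = 0")
    case True then show ?thesis using nb[OF assms] by simp
  next
    case False
    then have Np: "N w > 0" using assms nb(2)[OF assms, of w] unfolding is_norm_def by force
    have "N ((1 / N w) *\<^sub>R w) = 1" using nb(4)[OF assms] Np by simp
    then have "xh \<bullet> ((1 / N w) *\<^sub>R w) \<le> dual_norm N xh"
      unfolding dual_norm_def by (intro cSup_upper bdd imageI) auto
    then show ?thesis using Np by (simp add: field_simps)
  qed
qed

theorem theorem2:
  fixes b \<xi> :: "real^'m" and xh v :: "real^'n" and ah :: "real^'n^'m"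
    and N :: "real^'n \<Rightarrow> real" and istar :: 'm
  assumes norm: "is_norm N"
    and xh_nz: "xh \<noteq> 0"
    and xi_nonneg: "\<forall>i. \<xi>$i \<ge> 0"
    and v_argmax: "N v = 1" "xh \<bullet> v = dual_norm N xh"
    and istar_argmin: "\<forall>i. f_val \<xi> N b xh ah istar - g_val \<xi> N b xh ah istar
                          \<le> f_val \<xi> N b xh ah i - g_val \<xi> N b xh ah i"
  shows
    "let A = (\<chi> i. if i = istar then a_f N b xh ah v istar else a_g N b xh ah v i);
         c = A$istar;
         \<pi> = (\<chi> k. if k = istar then (1::real) else 0);
         val = f_val \<xi> N b xh ah istar + (\<Sum>i\<in>UNIV - {istar}. g_val \<xi> N b xh ah i)
     in nlo_sd_feasible b xh A c \<pi>
      \<and> nlo_sd_obj \<xi> N ah A = val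
      \<and> (\<forall>A' c' \<pi>'. nlo_sd_feasible b xh A' c' \<pi>' \<longrightarrow> val \<le> nlo_sd_obj \<xi> N ah A')
      \<and> ((\<forall>i. b$i \<noteq> 0 \<and> ah$i \<noteq> 0) \<longrightarrow> c \<noteq> 0 \<and> (\<forall>i. A$i \<noteq> 0))"
proof -
  define D where "D = dual_norm N xh"
  define r where "r i = ah$i \<bullet> xh - b$i" for i
  have nN: "N w \<ge> 0" for w using nb(2)[OF norm] .
  have Dpos: "D > 0"
  proof -
    have "xh \<bullet> xh \<le> D * N xh" unfolding D_def by (rule dual_bound[OF norm])
    moreover have "xh \<bullet> xh > 0" using xh_nz by simp
    ultimately show ?thesis using nN[of xh] by (metis less_le_trans mult_le_0_iff not_le)
  qed
  have vx: "v \<bullet> xh = D" using v_argmax(2) by (simp add: D_def inner_commute)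
  have af_x: "a_f N b xh ah v i \<bullet> xh = b$i" for i
    using Dpos vx unfolding a_f_def D_def[symmetric] by (simp add: inner_diff_left)
  have af_N: "N (a_f N b xh ah v i - ah$i) = \<bar>r i\<bar> / D" for i
  proof -
    have "a_f N b xh ah v i - ah$i = (- (r i / D)) *\<^sub>R v"
      unfolding a_f_def D_def[symmetric] r_def by simp
    then show ?thesis using nb(4)[OF norm] nb(3)[OF norm] v_argmax(1) Dpos by simp
  qed
  have f_eq: "f_val \<xi> N b xh ah i = \<xi>$i * (\<bar>r i\<bar> / D)" for i
    unfolding f_val_def r_def D_def by simp
  have bnd: "\<bar>r i\<bar> / D \<le> N (w - ah$i)" if "w \<bullet> xh = b$i" for w i
  proof -
    have "xh \<bullet> (w - ah$i) \<le> D * N (w - ah$i)" unfolding D_def by (rule dual_bound[OF norm])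
    moreover have "xh \<bullet> (ah$i - w) \<le> D * N (ah$i - w)" unfolding D_def by (rule dual_bound[OF norm])
    moreover have "N (ah$i - w) = N (w - ah$i)" using nb(3)[OF norm, of "w - ah$i"] by simp
    moreover have "xh \<bullet> (w - ah$i) = - r i" using that by (simp add: r_def inner_diff_right inner_commute)
    moreover have "xh \<bullet> (ah$i - w) = r i" using that by (simp add: r_def inner_diff_right inner_commute)
    ultimately have "\<bar>r i\<bar> \<le> D * N (w - ah$i)" by (simp add: abs_le_iff)
    then show ?thesis using Dpos by (simp add: field_simps)
  qed
  have lowf: "f_val \<xi> N b xh ah i \<le> \<xi>$i * N (w - ah$i)" if "w \<bullet> xh = b$i" for w i
    unfolding f_eq using xi_nonneg by (intro mult_left_mono[OF bnd[OF that]]) auto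
  have lowg: "g_val \<xi> N b xh ah i \<le> \<xi>$i * N (w - ah$i)" if "w \<bullet> xh \<ge> b$i" for w i
  proof (cases "ah$i \<bullet> xh < b$i")
    case True
    have "\<bar>r i\<bar> / D \<le> (w - ah$i) \<bullet> xh / D" using True that Dpos
      by (simp add: r_def inner_diff_left divide_right_mono)
    also have "(w - ah$i) \<bullet> xh \<le> D * N (w - ah$i)" unfolding D_def
      using dual_bound[OF norm] by (metis inner_commute)
    then have "(w - ah$i) \<bullet> xh / D \<le> N (w - ah$i)" using Dpos by (simp add: field_simps)
    finally have "\<bar>r i\<bar> / D \<le> N (w - ah$i)" .
    then show ?thesis using True xi_nonneg unfolding g_val_def f_eq by (simp del: times_divide_eq_right add: mult_left_mono)
  next
    case False
    then show ?thesis using xi_nonneg nN unfolding g_val_def by simp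
  qed
  have gx: "g_val \<xi> N b xh ah i \<le> f_val \<xi> N b xh ah i" for i
    unfolding g_val_def f_eq using xi_nonneg Dpos by auto
  define A where "A = (\<chi> i. if i = istar then a_f N b xh ah v istar else a_g N b xh ah v i)"
  define c where "c = A$istar"
  define \<pi> where "\<pi> = (\<chi> k. if k = istar then (1::real) else 0)"
  define val where "val = f_val \<xi> N b xh ah istar + (\<Sum>i\<in>UNIV - {istar}. g_val \<xi> N b xh ah i)"
  have sum_ip: "(\<Sum>j\<in>UNIV. x$j * y$j) = x \<bullet> y" for x y :: "real^'n"
    by (simp add: inner_vec_def)
  have Ax: "A$i \<bullet> xh \<ge> b$i" for i
    unfolding A_def a_g_def using af_x by auto
  have Ai: "A$istar \<bullet> xh = b$istar" unfolding A_def using af_x by simp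
  have feas: "nlo_sd_feasible b xh A c \<pi>"
    unfolding nlo_sd_feasible_def sum_ip
  proof (intro conjI allI)
    show "c \<bullet> xh - (\<Sum>i\<in>UNIV. b $ i * \<pi> $ i) = 0"
      unfolding c_def \<pi>_def using Ai by (simp add: if_distrib sum.delta cong: if_cong)
    show "b$i \<le> A$i \<bullet> xh" for i by (rule Ax)
    show "(\<Sum>i\<in>UNIV. \<pi> $ i) = 1" unfolding \<pi>_def by simp
    show "(\<Sum>i\<in>UNIV. A $ i $ j * \<pi> $ i) = c $ j" for j
      unfolding \<pi>_def c_def by (simp add: if_distrib sum.delta cong: if_cong)
    show "0 \<le> \<pi> $ i" for i unfolding \<pi>_def by simp
  qed
  have termi: "\<xi>$i * N (A$i - ah$i) = (if i = istar then f_val \<xi> N b xh ah i else g_val \<xi> N b xh ah i)" for i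
  proof (cases "i = istar")
    case True then show ?thesis unfolding A_def using af_N f_eq by simp
  next
    case False then show ?thesis unfolding A_def a_g_def g_val_def using af_N f_eq nb(1)[OF norm] by auto
  qed
  have sumrem: "(\<Sum>i\<in>UNIV. h i) = h k + (\<Sum>i\<in>UNIV - {k}. h i)" for h :: "'m \<Rightarrow> real" and k
    by (simp add: sum.remove)
  have obj: "nlo_sd_obj \<xi> N ah A = val"
    unfolding nlo_sd_obj_def val_def termi using sumrem[of _ istar] by simp
  have opt: "val \<le> nlo_sd_obj \<xi> N ah A'" if fe: "nlo_sd_feasible b xh A' c' \<pi>'" for A' c' \<pi>'
  proof -
    have c1: "c' \<bullet> xh = (\<Sum>i\<in>UNIV. b$i * \<pi>'$i)" and c2: "\<forall>i. A'$i \<bullet> xh \<ge> b$i"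
      and c3: "(\<Sum>i\<in>UNIV. \<pi>'$i) = 1" and c4: "\<forall>j. (\<Sum>i\<in>UNIV. A'$i$j * \<pi>'$i) = c'$j"
      and c5: "\<forall>i. \<pi>'$i \<ge> 0"
      using fe unfolding nlo_sd_feasible_def sum_ip by auto
    have "(\<Sum>i\<in>UNIV. \<pi>'$i * (A'$i \<bullet> xh - b$i)) = (\<Sum>i\<in>UNIV. \<pi>'$i * (A'$i \<bullet> xh)) - (\<Sum>i\<in>UNIV. b$i * \<pi>'$i)"
      by (simp add: right_diff_distrib sum_subtractf mult.commute)
    also have "(\<Sum>i\<in>UNIV. \<pi>'$i * (A'$i \<bullet> xh)) = c' \<bullet> xh"
    proof -
      have "(\<Sum>i\<in>UNIV. \<pi>'$i * (A'$i \<bullet> xh)) = (\<Sum>i\<in>UNIV. \<Sum>j\<in>UNIV. A'$i$j * \<pi>'$i * xh$j)"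
        by (simp add: inner_vec_def sum_distrib_left mult_ac)
      also have "\<dots> = (\<Sum>j\<in>UNIV. \<Sum>i\<in>UNIV. A'$i$j * \<pi>'$i * xh$j)" by (rule sum.swap)
      also have "\<dots> = (\<Sum>j\<in>UNIV. c'$j * xh$j)" using c4 by (simp add: sum_distrib_right[symmetric])
      finally show ?thesis by (simp add: sum_ip)
    qed
    finally have S0: "(\<Sum>i\<in>UNIV. \<pi>'$i * (A'$i \<bullet> xh - b$i)) = 0" using c1 by simp
    obtain k where k: "A'$k \<bullet> xh = b$k"
    proof (rule ccontr)
      assume "\<not> thesis"
      then have ne: "A'$k \<bullet> xh \<noteq> b$k" for k using that by blast
      have nn: "\<pi>'$i * (A'$i \<bullet> xh - b$i) \<ge> 0" for i using c2 c5 by simp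
      then have "\<forall>i. \<pi>'$i * (A'$i \<bullet> xh - b$i) = 0" using S0 sum_nonneg_eq_0_iff[of UNIV "\<lambda>i. \<pi>'$i * (A'$i \<bullet> xh - b$i)"] by simp
      then have "\<forall>i. \<pi>'$i = 0" using ne by (metis mult_eq_0_iff right_minus_eq)
      then show False using c3 by simp
    qed
    have "val \<le> f_val \<xi> N b xh ah k + (\<Sum>i\<in>UNIV - {k}. g_val \<xi> N b xh ah i)"
      using istar_argmin sumrem[of "g_val \<xi> N b xh ah" istar] sumrem[of "g_val \<xi> N b xh ah" k]
      unfolding val_def by (smt (verit))
    also have "\<dots> \<le> \<xi>$k * N (A'$k - ah$k) + (\<Sum>i\<in>UNIV - {k}. \<xi>$i * N (A'$i - ah$i))"
      using lowf[OF k] lowg c2 by (intro add_mono sum_mono) auto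
    also have "\<dots> = nlo_sd_obj \<xi> N ah A'" unfolding nlo_sd_obj_def using sumrem[of "\<lambda>i. \<xi>$i * N (A'$i - ah$i)" k] by simp
    finally show ?thesis .
  qed
  have nz: "(\<forall>i. b$i \<noteq> 0 \<and> ah$i \<noteq> 0) \<longrightarrow> c \<noteq> 0 \<and> (\<forall>i. A$i \<noteq> 0)"
  proof
    assume h: "\<forall>i. b$i \<noteq> 0 \<and> ah$i \<noteq> 0"
    have "A$i \<noteq> 0" for i
    proof (cases "i = istar \<or> ah$i \<bullet> xh < b$i")
      case True
      then have "A$i \<bullet> xh = b$i" unfolding A_def a_g_def using af_x by auto
      then show ?thesis using h by auto
    next
      case False then show ?thesis unfolding A_def a_g_def using h by auto
    qed
    then show "c \<noteq> 0 \<and> (\<forall>i. A$i \<noteq> 0)" unfolding c_def by auto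
  qed
  show ?thesis unfolding Let_def
    using feas obj opt nz unfolding A_def[symmetric] c_def[symmetric] \<pi>_def[symmetric] val_def[symmetric]
    by blast
qed

end
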